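(* Under the hypotheses that $(\mathcal G_A,p^A)$ and $(\mathcal G_B,p^B)$ are CPS's on the finite set $\Omega$ (satisfying the standing assumptions), each satisfying certainty reflection and being $1$-closed, and for any fixed event $E$ and $q_A,q_B\in[0,1]$: if $\omega\in C^\infty$, then $m(\omega)\subseteq C^\infty$.
   Context: $\Omega$ is a finite set; every subset is an event. A CPS is a pair $(\mathcal G,p)$ where $\mathcal G$ is a family of nonempty subsets of $\Omega$ and $p$ assigns to each $G\in\mathcal G$ a probability measure $p_G$ on $\Omega$ with $p_G(G)=1$ and $p_G(E)=p_G(F)p_F(E)$ whenever $E\subseteq F\subseteq G$, $F,G\in\mathcal G$. Standing assumption: each conditioning family is closed under unions and nonempty intersections and covers $\Omega$. Atom: $m_i(\omega)=\bigcap\{G\in\mathcal G_i:\omega\in G\}$; $m(\omega)=\bigcap\{G\in\mathcal G_A\cap\mathcal G_B:\omega\in G\}$. $(\mathcal G_i,p^i)$ is $1$-closed if every $L\subseteq G$ with $G\in\mathcal G_i$ and $p^i_G(L)=1$ belongs to $\mathcal G_i$. Certainty reflection: for every event $E$, $q\in[0,1]$, $\omega$: $p^i_{m_i(\omega)}(E)=q$ implies $p^i_{m_i(\omega)}(\{\omega':p^i_{m_i(\omega')}(E)=q\})=1$. $C_i(F)=\{\omega:p^i_{m_i(\omega)}(F)=1\}$. $A^0=\{\omega:p^A_{m_A(\omega)}(E)=q_A\}$, $B^0=\{\omega:p^B_{m_B(\omega)}(E)=q_B\}$, $A^{n+1}=A^n\cap C_A(B^n)$, $B^{n+1}=B^n\cap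 C_B(A^n)$, $C^\infty=\bigcap_{n\ge0}A^n\cap\bigcap_{n\ge0}B^n$. *)

theory Defs
  imports Complex_Main
begin

text \<open>The finite state space Omega is the universe of a finite type 'w.
  A conditioning family is a set of events; the CPS assigns to each
  conditioning event G a set function p G on events.\<close>

definition prob_measure :: "('w set \<Rightarrow> real) \<Rightarrow> bool" where
  "prob_measure \<mu> \<longleftrightarrow>
     (\<forall>E. 0 \<le> \<mu> E) \<and> \<mu> UNIV = 1 \<and>
     (\<forall>E F. E \<inter> F = {} \<longrightarrow> \<mu> (E \<union> F) = \<mu> E + \<mu> F)"

definition cps :: "'w set set \<Rightarrow> ('w set \<Rightarrow> 'w set \<Rightarrow> real) \<Rightarrow> bool" where
  "cps \<G> p \<longleftrightarrow>
     (\<forall>G\<in>\<G>. G \<noteq> {}) \<and>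
     (\<forall>G\<in>\<G>. prob_measure (p G) \<and> p G G = 1) \<and>
     (\<forall>E F G. E \<subseteq> F \<longrightarrow> F \<subseteq> G \<longrightarrow> F \<in> \<G> \<longrightarrow> G \<in> \<G> \<longrightarrow> p G E = p G F * p F E)"

definition standing :: "'w set set \<Rightarrow> bool" where
  "standing \<G> \<longleftrightarrow>
     (\<forall>F\<in>\<G>. \<forall>G\<in>\<G>. F \<union> G \<in> \<G>) \<and>
     (\<forall>F\<in>\<G>. \<forall>G\<in>\<G>. F \<inter> G \<noteq> {} \<longrightarrow> F \<inter> G \<in> \<G>) \<and>
     \<Union>\<G> = UNIV"

definition atom :: "'w set set \<Rightarrow> 'w \<Rightarrow> 'w set" where
  "atom \<G> \<omega> = \<Inter>{G\<in>\<G>. \<omega> \<in> G}"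

definition one_closed :: "'w set set \<Rightarrow> ('w set \<Rightarrow> 'w set \<Rightarrow> real) \<Rightarrow> bool" where
  "one_closed \<G> p \<longleftrightarrow> (\<forall>G\<in>\<G>. \<forall>L. L \<subseteq> G \<longrightarrow> p G L = 1 \<longrightarrow> L \<in> \<G>)"

definition certainty_reflection :: "'w set set \<Rightarrow> ('w set \<Rightarrow> 'w set \<Rightarrow> real) \<Rightarrow> bool" where
  "certainty_reflection \<G> p \<longleftrightarrow>
     (\<forall>E q \<omega>. 0 \<le> q \<longrightarrow> q \<le> 1 \<longrightarrow> p (atom \<G> \<omega>) E = q \<longrightarrow>
        p (atom \<G> \<omega>) {\<omega>'. p (atom \<G> \<omega>') E = q} = 1)"

definition certain :: "'w set set \<Rightarrow> ('w set \<Rightarrow> 'w set \<Rightarrow> real) \<Rightarrow> 'w set \<Rightarrow> 'w set" where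
  "certain \<G> p F = {\<omega>. p (atom \<G> \<omega>) F = 1}"

primrec AB_seq :: "'w set set \<Rightarrow> ('w set \<Rightarrow> 'w set \<Rightarrow> real) \<Rightarrow>
    'w set set \<Rightarrow> ('w set \<Rightarrow> 'w set \<Rightarrow> real) \<Rightarrow> 'w set \<Rightarrow> real \<Rightarrow> real \<Rightarrow> nat \<Rightarrow> 'w set \<times> 'w set" where
  "AB_seq GA pA GB pB E qA qB 0 =
     ({\<omega>. pA (atom GA \<omega>) E = qA}, {\<omega>. pB (atom GB \<omega>) E = qB})"
| "AB_seq GA pA GB pB E qA qB (Suc n) =
     (let (A, B) = AB_seq GA pA GB pB E qA qB n
      in (A \<inter> certain GA pA B, B \<inter> certain GB pB A))"

definition C_inf :: "'w set set \<Rightarrow> ('w set \<Rightarrow> 'w set \<Rightarrow> real) \<Rightarrow>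
    'w set set \<Rightarrow> ('w set \<Rightarrow> 'w set \<Rightarrow> real) \<Rightarrow> 'w set \<Rightarrow> real \<Rightarrow> real \<Rightarrow> 'w set" where
  "C_inf GA pA GB pB E qA qB =
     (\<Inter>n. fst (AB_seq GA pA GB pB E qA qB n)) \<inter> (\<Inter>n. snd (AB_seq GA pA GB pB E qA qB n))"

end

theory Submission
  imports Defs
begin

lemma pm_compl: "prob_measure \<mu> \<Longrightarrow> \<mu> (- X) = 1 - \<mu> X"
proof -
  assume a: "prob_measure \<mu>"
  have "\<mu> (X \<union> - X) = \<mu> X + \<mu> (- X)" using a unfolding prob_measure_def by blast
  moreover have "X \<union> - X = UNIV" by blast
  ultimately show ?thesis using a unfolding prob_measure_def by simp
qed

lemma pm_int1: "prob_measure \<mu> \<Longrightarrow> \<mu> X = 1 \<Longrightarrow> \<mu> Y = 1 \<Longrightarrow> \<mu> (X \<inter> Y) = 1"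
proof -
  assume a: "prob_measure \<mu>" and x: "\<mu> X = 1" and y: "\<mu> Y = 1"
  have c: "\<mu> (- Y) = 0" using pm_compl[OF a] y by simp
  have "\<mu> ((X - Y) \<union> (- Y - X)) = \<mu> (X - Y) + \<mu> (- Y - X)"
  proof -
    have "(X - Y) \<inter> (- Y - X) = {}" by blast
    then show ?thesis using a unfolding prob_measure_def by blast
  qed
  moreover have "(X - Y) \<union> (- Y - X) = - Y" by blast
  moreover have "\<mu> (- Y - X) \<ge> 0" "\<mu> (X - Y) \<ge> 0" using a unfolding prob_measure_def by auto
  ultimately have d: "\<mu> (X - Y) = 0" using c by (metis add_nonneg_eq_0_iff)
  have "\<mu> ((X \<inter> Y) \<union> (X - Y)) = \<mu> (X \<inter> Y) + \<mu> (X - Y)"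
  proof -
    have "(X \<inter> Y) \<inter> (X - Y) = {}" by blast
    then show ?thesis using a unfolding prob_measure_def by blast
  qed
  moreover have "(X \<inter> Y) \<union> (X - Y) = X" by blast
  ultimately show ?thesis using d x by simp
qed

lemma pm_Inter1: "finite S \<Longrightarrow> prob_measure \<mu> \<Longrightarrow> (\<forall>X\<in>S. \<mu> X = 1) \<Longrightarrow> \<mu> (\<Inter>S) = 1"
proof (induction S rule: finite_induct)
  case empty
  then show ?case unfolding prob_measure_def by simp
next
  case (insert x F)
  then show ?case using pm_int1[of \<mu>] by simp
qed

lemma union_closed: "finite S \<Longrightarrow> S \<noteq> {} \<Longrightarrow> standing G \<Longrightarrow> S \<subseteq> G \<Longrightarrow> \<Union>S \<in> G"
proof (induction S rule: finite_ne_induct)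
  case (singleton x) then show ?case by simp
next
  case (insert x F) then show ?case unfolding standing_def by simp
qed

lemma inter_closed: "finite S \<Longrightarrow> S \<noteq> {} \<Longrightarrow> standing G \<Longrightarrow> S \<subseteq> G \<Longrightarrow> \<omega> \<in> \<Inter>S \<Longrightarrow> \<Inter>S \<in> G"
proof (induction S rule: finite_ne_induct)
  case (singleton x) then show ?case by simp
next
  case (insert x F)
  then have "\<Inter>F \<in> G" by simp
  moreover have "x \<inter> \<Inter>F \<noteq> {}" using insert by auto
  ultimately show ?case using insert unfolding standing_def by simp
qed

lemma atom_in:
  fixes G :: "('w::finite) set set"
  assumes "standing G"
  shows "atom G \<omega> \<in> G" "\<omega> \<in> atom G \<omega>"
proof -
  have "\<omega> \<in> \<Union>G" using assms unfolding standing_def by simp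
  then have ne: "{X\<in>G. \<omega> \<in> X} \<noteq> {}" by blast
  show "\<omega> \<in> atom G \<omega>" unfolding atom_def by blast
  then show "atom G \<omega> \<in> G" unfolding atom_def
    using inter_closed[OF finite_subset[OF subset_UNIV finite_UNIV] ne assms] by blast
qed

lemma in_family:
  fixes G :: "('w::finite) set set"
  assumes cps: "cps G p" and st: "standing G" and oc: "one_closed G p"
    and ne: "\<omega>0 \<in> C" and h: "\<forall>\<omega>\<in>C. p (atom G \<omega>) C = 1"
  shows "C \<in> G"
proof -
  have L: "atom G \<omega> \<inter> C \<in> G" if "\<omega> \<in> C" for \<omega>
  proof -
    have aG: "atom G \<omega> \<in> G" using atom_in[OF st] by blast
    then have pm: "prob_measure (p (atom G \<omega>))" "p (atom G \<omega>) (atom G \<omega>) = 1"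
      using cps unfolding cps_def by auto
    have "p (atom G \<omega>) (atom G \<omega> \<inter> C) = 1" using pm_int1[OF pm(1) pm(2)] h that by blast
    then show ?thesis using oc aG unfolding one_closed_def by blast
  qed
  have eq: "C = \<Union>((\<lambda>\<omega>. atom G \<omega> \<inter> C) ` C)" using atom_in(2)[OF st] by blast
  have "\<Union>((\<lambda>\<omega>. atom G \<omega> \<inter> C) ` C) \<in> G"
    by (rule union_closed) (use ne L st in auto)
  then show ?thesis using eq by simp
qed

theorem lemma4:
  fixes GA GB :: "('w::finite) set set"
    and pA pB :: "'w set \<Rightarrow> 'w set \<Rightarrow> real"
    and E :: "'w set" and qA qB :: real and \<omega> :: 'w
  assumes "cps GA pA" and "standing GA" and "certainty_reflection GA pA" and "one_closed GA pA"
      and "cps GB pB" and "standing GB" and "certainty_reflection GB pB" and "one_closed GB pB"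
      and "0 \<le> qA" "qA \<le> 1" "0 \<le> qB" "qB \<le> 1"
      and "\<omega> \<in> C_inf GA pA GB pB E qA qB"
  shows "atom (GA \<inter> GB) \<omega> \<subseteq> C_inf GA pA GB pB E qA qB"
proof -
  define A where "A n = fst (AB_seq GA pA GB pB E qA qB n)" for n
  define B where "B n = snd (AB_seq GA pA GB pB E qA qB n)" for n
  define C where "C = C_inf GA pA GB pB E qA qB"
  have A0: "A 0 = {\<omega>. pA (atom GA \<omega>) E = qA}" and B0: "B 0 = {\<omega>. pB (atom GB \<omega>) E = qB}"
    unfolding A_def B_def by simp_all
  have AS: "A (Suc n) = A n \<inter> certain GA pA (B n)" and BS: "B (Suc n) = B n \<inter> certain GB pB (A n)" for n
    unfolding A_def B_def by (simp_all add: split_def Let_def)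
  have Cdef: "C = \<Inter>(range A) \<inter> \<Inter>(range B)" unfolding C_def C_inf_def A_def B_def by simp
  have inA: "\<omega>' \<in> A n" "\<omega>' \<in> B n" if "\<omega>' \<in> C" for \<omega>' n using that Cdef by auto
  have finr: "finite (range A)" "finite (range B)" by simp_all
  have pmA: "prob_measure (pA (atom GA w))" for w
    using assms(1) atom_in[OF assms(2)] unfolding cps_def by blast
  have pmB: "prob_measure (pB (atom GB w))" for w
    using assms(5) atom_in[OF assms(6)] unfolding cps_def by blast
  have cA: "pA (atom GA w) (B n) = 1" if "w \<in> C" for w n
    using inA(1)[OF that, of "Suc n"] unfolding AS certain_def by simp
  have cB: "pB (atom GB w) (A n) = 1" if "w \<in> C" for w n
    using inA(2)[OF that, of "Suc n"] unfolding BS certain_def by simp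
  have sA: "pA (atom GA w) (A n) = 1" if "w \<in> C" for w n
  proof (induction n)
    case 0
    have "pA (atom GA w) E = qA" using inA(1)[OF that, of 0] A0 by simp
    then show ?case using assms(3,9,10) unfolding certainty_reflection_def A0 by blast
  next
    case (Suc n)
    have "pA (atom GA w) (certain GA pA (B n)) = 1"
      using cA[OF that, of n] assms(3) unfolding certainty_reflection_def certain_def by simp
    then show ?case unfolding AS using pm_int1[OF pmA Suc] by simp
  qed
  have sB: "pB (atom GB w) (B n) = 1" if "w \<in> C" for w n
  proof (induction n)
    case 0
    have "pB (atom GB w) E = qB" using inA(2)[OF that, of 0] B0 by simp
    then show ?case using assms(7,11,12) unfolding certainty_reflection_def B0 by blast
  next
    case (Suc n)
    have "pB (atom GB w) (certain GB pB (A n)) = 1"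
      using cB[OF that, of n] assms(7) unfolding certainty_reflection_def certain_def by simp
    then show ?case unfolding BS using pm_int1[OF pmB Suc] by simp
  qed
  have hA: "\<forall>w\<in>C. pA (atom GA w) C = 1"
  proof
    fix w assume w: "w \<in> C"
    have "pA (atom GA w) (\<Inter>(range A)) = 1" using pm_Inter1[OF finr(1) pmA] sA[OF w] by blast
    moreover have "pA (atom GA w) (\<Inter>(range B)) = 1" using pm_Inter1[OF finr(2) pmA] cA[OF w] by blast
    ultimately show "pA (atom GA w) C = 1" unfolding Cdef using pm_int1[OF pmA] by blast
  qed
  have hB: "\<forall>w\<in>C. pB (atom GB w) C = 1"
  proof
    fix w assume w: "w \<in> C"
    have "pB (atom GB w) (\<Inter>(range A)) = 1" using pm_Inter1[OF finr(1) pmB] cB[OF w] by blast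
    moreover have "pB (atom GB w) (\<Inter>(range B)) = 1" using pm_Inter1[OF finr(2) pmB] sB[OF w] by blast
    ultimately show "pB (atom GB w) C = 1" unfolding Cdef using pm_int1[OF pmB] by blast
  qed
  have w: "\<omega> \<in> C" using assms(13) C_def by simp
  have "C \<in> GA" using in_family[OF assms(1,2,4) w hA] .
  moreover have "C \<in> GB" using in_family[OF assms(5,6,8) w hB] .
  ultimately show ?thesis unfolding atom_def C_def[symmetric] using w by blast
qed

end
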